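(* Let $G=(G_1,\dots,G_n)$ be a mean zero Gaussian vector with strictly positive definite covariance matrix $\Gamma$, and $\alpha\in\mathbb R$. For $t>0$ and a diagonal matrix $S$ with diagonal entries in $[0,1]$, let $\Lambda=t(I-S)$, let $\Phi(t,S)=\log\mathbb E[\exp(-\frac12\sum_i\Lambda_{i,i}(G_i+\alpha)^2)]$, $\Phi_1(t,S)=\Phi(t,S)|_{\alpha=0}$, $\Phi_2=\Phi-\Phi_1$, and $Q=[I+(t\Gamma)^{-1}]^{-1}$. Then for all $t$ sufficiently large, $$\Phi_2(t,S)=\frac{\alpha^2t}{2}\,\mathbf 1\cdot\Big[(Q-I)+(I-Q^{-1})\Big(\sum_{m=1}^\infty(QS)^m\Big)(Q-I)\Big]\cdot\mathbf 1^T,$$ where $\mathbf 1=(1,\dots,1)$.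
   Context: $\Phi_2$ is regarded as a power series in the diagonal entries of $S$ about $S=0$. *)

theory Defs
  imports "HOL-Probability.Probability"
begin

definition gauss_density :: "real^'n^'n \<Rightarrow> real^'n \<Rightarrow> real" where
  "gauss_density \<Gamma> x =
     exp (- (1/2) * (x \<bullet> (matrix_inv \<Gamma> *v x))) / sqrt ((2*pi) ^ CARD('n) * det \<Gamma>)"

definition matpow :: "real^'n^'n \<Rightarrow> nat \<Rightarrow> real^'n^'n" where
  "matpow A m = ((\<lambda>B. A ** B) ^^ m) (mat 1)"

definition Phi :: "'a measure \<Rightarrow> ('a \<Rightarrow> real^'n) \<Rightarrow> real \<Rightarrow> real \<Rightarrow> real^'n^'n \<Rightarrow> real" where
  "Phi M G \<alpha> t S =
     (let \<Lambda> = t *\<^sub>R (mat 1 - S) in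
      ln (\<integral>\<omega>. exp (- (1/2) * (\<Sum>i\<in>UNIV. \<Lambda>$i$i * (G \<omega> $ i + \<alpha>)\<^sup>2)) \<partial>M))"

definition Phi2 :: "'a measure \<Rightarrow> ('a \<Rightarrow> real^'n) \<Rightarrow> real \<Rightarrow> real \<Rightarrow> real^'n^'n \<Rightarrow> real" where
  "Phi2 M G \<alpha> t S = Phi M G \<alpha> t S - Phi M G 0 t S"

end

theory Submission
  imports Defs
begin

lemma mm_add_r: "((A::real^'n^'m) + B) ** C = A ** C + B ** C"
  by (vector matrix_matrix_mult_def sum.distrib[symmetric] field_simps)
lemma mm_sub_l: "(A::real^'n^'m) ** (B - C) = A ** B - A ** C"
  by (vector matrix_matrix_mult_def sum_subtractf[symmetric] field_simps)
lemma mm_sub_r: "((A::real^'n^'m) - B) ** C = A ** C - B ** C"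
  by (vector matrix_matrix_mult_def sum_subtractf[symmetric] field_simps)

lemma minv:
  fixes A :: "real^'n^'n" assumes "invertible A"
  shows "A ** matrix_inv A = mat 1" "matrix_inv A ** A = mat 1"
  using someI_ex[OF assms[unfolded invertible_def]] unfolding matrix_inv_def by auto

lemma minv_unique:
  fixes A B :: "real^'n^'n" assumes "B ** A = mat 1"
  shows "invertible A" "matrix_inv A = B"
proof -
  show i: "invertible A" using assms invertible_left_inverse by blast
  have "matrix_inv A = (B ** A) ** matrix_inv A" using assms by simp
  also have "\<dots> = B" using minv[OF i] by (metis matrix_mul_assoc matrix_mul_rid)
  finally show "matrix_inv A = B" .
qed

lemma pd_invertible:
  fixes A :: "real^'n^'n" assumes "\<forall>x. x \<noteq> 0 \<longrightarrow> 0 < x \<bullet> (A *v x)"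
  shows "invertible A"
proof -
  have "\<forall>x. A *v x = 0 \<longrightarrow> x = 0" using assms by force
  then show ?thesis using matrix_left_invertible_ker invertible_left_inverse by blast
qed

lemma inner_transpose: "x \<bullet> ((A::real^'n^'m) *v y) = (transpose A *v x) \<bullet> y"
  by (simp add: dot_lmul_matrix)

lemma sym_inner: "transpose A = A \<Longrightarrow> x \<bullet> ((A::real^'n^'n) *v y) = y \<bullet> (A *v x)"
  by (metis inner_transpose inner_commute)

lemma matpow_Suc: "matpow A (Suc m) = A ** matpow A m"
  by (simp add: matpow_def)
lemma matpow_0: "matpow A 0 = mat 1"
  by (simp add: matpow_def)

lemma contraction_q:
  fixes M :: "real^'n^'n"
  assumes "\<forall>x. x \<noteq> 0 \<longrightarrow> norm (M *v x) < norm x"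
  shows "\<exists>q. 0 \<le> q \<and> q < 1 \<and> (\<forall>x. norm (M *v x) \<le> q * norm x)"
proof -
  obtain i :: 'n where True by auto
  have ne: "sphere (0::real^'n) 1 \<noteq> {}" using norm_axis_1[of i] by force
  have co: "continuous_on (sphere 0 1) (\<lambda>x. norm (M *v x))"
    by (intro continuous_on_norm linear_continuous_on matrix_vector_mul_bounded_linear)
  obtain x0 where x0: "x0 \<in> sphere 0 1" "\<forall>y\<in>sphere 0 1. norm (M *v y) \<le> norm (M *v x0)"
    using continuous_attains_sup[OF compact_sphere ne co] by blast
  define q where "q = norm (M *v x0)"
  have "x0 \<noteq> 0" using x0 by auto
  then have q1: "q < 1" using assms x0 unfolding q_def by auto
  have "norm (M *v x) \<le> q * norm x" for x
  proof (cases "x = 0")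
    case False
    let ?y = "(1 / norm x) *\<^sub>R x"
    have "?y \<in> sphere 0 1" using False by auto
    then have "norm (M *v ?y) \<le> q" using x0 q_def by auto
    then have "(1 / norm x) * norm (M *v x) \<le> q"
      by (simp add: matrix_vector_mult_scaleR)
    then show ?thesis using False by (simp add: field_simps)
  qed simp
  then show ?thesis using q1 q_def by (intro exI[of _ q]) auto
qed

lemma matpow_bound:
  fixes M :: "real^'n^'n"
  assumes "0 \<le> q" "\<forall>x. norm (M *v x) \<le> q * norm x"
  shows "norm (matpow M m *v x) \<le> q ^ m * norm x"
proof (induction m arbitrary: x)
  case 0 then show ?case by (simp add: matpow_0)
next
  case (Suc m)
  have "norm (matpow M (Suc m) *v x) = norm (M *v (matpow M m *v x))"
    by (simp add: matpow_Suc matrix_vector_mul_assoc)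
  also have "\<dots> \<le> q * norm (matpow M m *v x)" using assms by auto
  also have "\<dots> \<le> q * (q ^ m * norm x)" using Suc assms by (intro mult_left_mono) auto
  finally show ?case by simp
qed

lemma mat_norm_entries:
  fixes B :: "real^'n^'n"
  assumes "\<And>i j. \<bar>B$i$j\<bar> \<le> e"
  shows "norm B \<le> real (CARD('n)) * (real (CARD('n)) * e)"
proof -
  have "norm B \<le> (\<Sum>i\<in>UNIV. norm (B$i))"
    unfolding norm_vec_def by (rule L2_set_le_sum) auto
  also have "\<dots> \<le> (\<Sum>i\<in>(UNIV::'n set). (\<Sum>j\<in>(UNIV::'n set). \<bar>B$i$j\<bar>))"
    by (intro sum_mono norm_le_l1_cart)
  also have "\<dots> \<le> (\<Sum>i\<in>(UNIV::'n set). (\<Sum>j\<in>(UNIV::'n set). e))"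
    by (intro sum_mono assms)
  finally show ?thesis by simp
qed

lemma contraction_summable:
  fixes M :: "real^'n^'n"
  assumes "\<forall>x. x \<noteq> 0 \<longrightarrow> norm (M *v x) < norm x"
  shows "summable (\<lambda>m. matpow M (Suc m))"
proof -
  obtain q where q: "0 \<le> q" "q < 1" "\<forall>x. norm (M *v x) \<le> q * norm x"
    using contraction_q[OF assms] by blast
  have ent: "\<bar>matpow M m $ i $ j\<bar> \<le> q ^ m" for m i j
  proof -
    have "(\<Sum>ja\<in>UNIV. matpow M m $ i $ ja * (if ja = j then 1 else 0)) = (\<Sum>ja\<in>UNIV. if ja = j then matpow M m $ i $ ja else 0)"
      by (intro sum.cong) auto
    then have "matpow M m $ i $ j = (matpow M m *v axis j 1) $ i"
      by (simp add: matrix_vector_mult_def axis_def)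
    then have "\<bar>matpow M m $ i $ j\<bar> \<le> norm (matpow M m *v axis j 1)"
      by (metis component_le_norm_cart)
    also have "\<dots> \<le> q ^ m" using matpow_bound[OF q(1) q(3), of m "axis j 1"] by simp
    finally show ?thesis .
  qed
  define C where "C = real (CARD('n)) * real (CARD('n))"
  have "norm (matpow M (Suc m)) \<le> C * q ^ Suc m" for m
  proof -
    have "norm (matpow M (Suc m)) \<le> real (CARD('n)) * (real (CARD('n)) * q ^ Suc m)"
      by (rule mat_norm_entries) (rule ent)
    then show ?thesis unfolding C_def by (simp add: mult.assoc)
  qed
  moreover have "summable (\<lambda>m. C * q ^ Suc m)"
    using q by (intro summable_mult summable_mult2) (simp add: summable_geometric)
  ultimately show ?thesis
    by (metis (no_types, lifting) summable_comparison_test' )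
qed


lemma tendsto_mmult_left:
  fixes X :: "nat \<Rightarrow> real^'n^'n"
  assumes "X \<longlonglongrightarrow> L"
  shows "(\<lambda>k. C ** X k) \<longlonglongrightarrow> C ** L"
proof (rule vec_tendstoI, rule vec_tendstoI)
  fix i j
  have "(\<lambda>k. X k $ l $ j) \<longlonglongrightarrow> L $ l $ j" for l
    by (intro tendsto_vec_nth assms)
  then have "(\<lambda>k. \<Sum>l\<in>UNIV. C $ i $ l * X k $ l $ j) \<longlonglongrightarrow> (\<Sum>l\<in>UNIV. C $ i $ l * L $ l $ j)"
    by (intro tendsto_sum tendsto_mult tendsto_const) auto
  then show "(\<lambda>k. (C ** X k) $ i $ j) \<longlonglongrightarrow> (C ** L) $ i $ j"
    by (simp add: matrix_matrix_mult_def)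
qed

lemma neumann:
  fixes M :: "real^'n^'n"
  assumes s: "summable (\<lambda>m. matpow M (Suc m))"
  shows "(mat 1 - M) ** (mat 1 + (\<Sum>m. matpow M (Suc m))) = mat 1"
proof -
  have part: "(mat 1 - M) ** (\<Sum>m<K. matpow M (Suc m)) = M - matpow M (Suc K)" for K
  proof (induction K)
    case 0 then show ?case by (simp add: matpow_Suc matpow_0)
  next
    case (Suc K)
    have "(mat 1 - M) ** (\<Sum>m<Suc K. matpow M (Suc m))
        = (mat 1 - M) ** (\<Sum>m<K. matpow M (Suc m)) + (mat 1 - M) ** matpow M (Suc K)"
      by (simp add: matrix_add_ldistrib)
    also have "\<dots> = M - matpow M (Suc (Suc K))"
      using Suc by (simp add: mm_sub_r matpow_Suc[of M "Suc K"])
    finally show ?case .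
  qed
  have "(\<lambda>K. (mat 1 - M) ** (\<Sum>m<K. matpow M (Suc m))) \<longlonglongrightarrow> (mat 1 - M) ** (\<Sum>m. matpow M (Suc m))"
    by (intro tendsto_mmult_left summable_LIMSEQ s)
  moreover have "(\<lambda>K. M - matpow M (Suc K)) \<longlonglongrightarrow> M - 0"
    by (intro tendsto_diff tendsto_const summable_LIMSEQ_zero s)
  ultimately have "(mat 1 - M) ** (\<Sum>m. matpow M (Suc m)) = M"
    using LIMSEQ_unique part by fastforce
  then show ?thesis by (simp add: matrix_add_ldistrib mm_sub_r)
qed

lemma key_identity:
  fixes Q W K S :: "real^'n^'n"
  assumes WQ: "W ** Q = mat 1" and KWS: "K ** (W - S) = mat 1" and WSK: "(W - S) ** K = mat 1"
  shows "- (mat 1 - S) + (mat 1 - S) ** K ** (mat 1 - S)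
       = (Q - mat 1) + (mat 1 - W) ** (K ** W - mat 1) ** (Q - mat 1)"
proof -
  have h1: "K ** S = K ** W - mat 1" using KWS by (simp add: mm_sub_l algebra_simps)
  have h2: "S ** K = W ** K - mat 1" using WSK by (simp add: mm_sub_r algebra_simps)
  have h3: "W ** K ** S = W ** K ** W - W"
    by (metis h1 matrix_mul_assoc mm_sub_l matrix_mul_rid)
  have h4: "K ** W ** Q = K" by (metis WQ matrix_mul_assoc matrix_mul_rid)
  have h5: "W ** K ** W ** Q = W ** K" by (metis WQ matrix_mul_assoc matrix_mul_rid)
  have L: "(mat 1 - S) ** K ** (mat 1 - S) = K - W ** K + mat 1 - K ** S + W ** K ** S - S"
    by (simp add: mm_sub_l mm_sub_r h2 mm_add_r algebra_simps)
  have R: "(mat 1 - W) ** (K ** W - mat 1) ** (Q - mat 1)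
      = K ** W ** Q - K ** W - Q + mat 1 - W ** K ** W ** Q + W ** K ** W + W ** Q - W"
    by (simp add: mm_sub_l mm_sub_r mm_add_r matrix_add_ldistrib matrix_mul_assoc algebra_simps)
  show ?thesis unfolding L R h1 h3 h4 h5 WQ by (simp add: algebra_simps)
qed

lemma lborel_translate_integral:
  fixes H :: "real^'n \<Rightarrow> real"
  assumes [measurable]: "H \<in> borel_measurable borel"
  shows "(\<integral>x. H (b + x) \<partial>lborel) = (\<integral>x. H x \<partial>lborel)"
proof -
  have eq: "lborel = distr lborel borel (\<lambda>x::real^'n. b + x)"
    using lborel_affine[of 1 b] by (simp add: density_1)
  have "(\<integral>x. H x \<partial>lborel) = (\<integral>x. H x \<partial>(distr lborel borel (\<lambda>x::real^'n. b + x)))"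
    by (simp only: eq[symmetric])
  also have "\<dots> = (\<integral>x. H (b + x) \<partial>lborel)"
    by (rule integral_distr) auto
  finally show ?thesis ..
qed

lemma cont_mv[continuous_intros]:
  "continuous_on S f \<Longrightarrow> continuous_on S (\<lambda>x. (L::real^'n^'m) *v f x)"
  using continuous_on_compose2[OF linear_continuous_on[OF matrix_vector_mul_bounded_linear[of L]], of S f]
  by auto

lemma quad_cont: "continuous_on UNIV (\<lambda>x::real^'n. exp (c * ((x + a) \<bullet> (L *v (x + a)))))"
  by (intro continuous_intros)

lemma quad_meas[measurable]: "(\<lambda>x::real^'n. exp (c * ((x + a) \<bullet> (L *v (x + a))))) \<in> borel_measurable borel"
  by (rule borel_measurable_continuous_onI[OF quad_cont])

lemma complete_square:
  fixes L P A :: "real^'n^'n"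
  assumes Ls: "transpose L = L" and Ps: "transpose P = P" and A: "A = L + P"
    and b: "A *v b = L *v a"
  shows "(x + a) \<bullet> (L *v (x + a)) + x \<bullet> (P *v x)
       = (a \<bullet> (L *v a) - b \<bullet> (A *v b)) + ((x + b) \<bullet> (L *v (x + b)) + (x + b) \<bullet> (P *v (x + b)))"
proof -
  have As: "transpose A = A" using Ls Ps A by (simp add: transpose_def vec_eq_iff)
  have s1: "a \<bullet> (L *v x) = x \<bullet> (L *v a)" using sym_inner[OF Ls] .
  have s2: "b \<bullet> (A *v x) = x \<bullet> (A *v b)" using sym_inner[OF As] .
  have e: "(x + b) \<bullet> (L *v (x + b)) + (x + b) \<bullet> (P *v (x + b)) = (x + b) \<bullet> (A *v (x + b))"
    using A by (simp add: matrix_vector_mult_add_rdistrib inner_add_right)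
  have e2: "(x + b) \<bullet> (A *v (x + b)) = x \<bullet> (A *v x) + 2 * (x \<bullet> (A *v b)) + b \<bullet> (A *v b)"
    using s2 by (simp add: matrix_vector_right_distrib inner_add_left inner_add_right)
  have e3: "(x + a) \<bullet> (L *v (x + a)) = x \<bullet> (L *v x) + 2 * (x \<bullet> (L *v a)) + a \<bullet> (L *v a)"
    using s1 by (simp add: matrix_vector_right_distrib inner_add_left inner_add_right)
  have e4: "x \<bullet> (A *v x) = x \<bullet> (L *v x) + x \<bullet> (P *v x)"
    using A by (simp add: matrix_vector_mult_add_rdistrib inner_add_right)
  show ?thesis unfolding e e2 e3 e4 b by simp
qed

lemma gauss_shift:
  fixes M :: "'a measure" and G :: "'a \<Rightarrow> real^'n" and \<Gamma> L A :: "real^'n^'n"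
  assumes M: "prob_space M"
    and D: "distributed M lborel G (\<lambda>x. ennreal (gauss_density \<Gamma> x))"
    and Ls: "transpose L = L" and Ps: "transpose (matrix_inv \<Gamma>) = matrix_inv \<Gamma>"
    and A: "A = L + matrix_inv \<Gamma>" and b: "A *v b = L *v a"
    and Lpsd: "\<forall>x. 0 \<le> x \<bullet> (L *v x)"
  shows "(\<integral>\<omega>. exp (-(1/2) * ((G \<omega> + a) \<bullet> (L *v (G \<omega> + a)))) \<partial>M)
       = exp (-(1/2) * (a \<bullet> (L *v a) - b \<bullet> (A *v b))) *
         (\<integral>\<omega>. exp (-(1/2) * ((G \<omega> + 0) \<bullet> (L *v (G \<omega> + 0)))) \<partial>M)"
    and "0 < (\<integral>\<omega>. exp (-(1/2) * ((G \<omega> + 0) \<bullet> (L *v (G \<omega> + 0)))) \<partial>M)"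
proof -
  define P where "P = matrix_inv \<Gamma>"
  define s where "s = sqrt ((2*pi) ^ CARD('n) * det \<Gamma>)"
  define k where "k = max 0 (1/s)"
  define gp where "gp x = k * exp (-(1/2) * ((x + 0) \<bullet> (P *v (x + 0))))" for x :: "real^'n"
  define f where "f a y = exp (-(1/2) * ((y + a) \<bullet> (L *v (y + a))))" for a y :: "real^'n"
  have fm[measurable]: "f c \<in> borel_measurable borel" for c
    unfolding f_def by (rule quad_meas)
  have gpm[measurable]: "gp \<in> borel_measurable borel"
    unfolding gp_def by measurable
  have k0: "0 \<le> k" unfolding k_def by simp
  have gp0: "0 \<le> gp x" for x unfolding gp_def using k0 by simp
  have gd: "ennreal (gauss_density \<Gamma> x) = ennreal (gp x)" for x
  proof -
    define e where "e = exp (- (1/2) * (x \<bullet> (matrix_inv \<Gamma> *v x)))"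
    have e0: "0 < e" unfolding e_def by simp
    have "max 0 (e * (1/s)) = e * max 0 (1/s)"
    proof (cases "0 \<le> 1/s")
      case True then show ?thesis using e0 by simp
    next
      case False
      then have "s < 0" by simp
      then have "e / s < 0" using e0 by (simp add: divide_pos_neg)
      then show ?thesis using e0 False by (simp add: max_def)
    qed
    then have "max 0 (gauss_density \<Gamma> x) = gp x"
      unfolding gauss_density_def gp_def k_def e_def s_def P_def by (simp add: mult.commute)
    then show ?thesis by (metis ennreal_max_0)
  qed
  have Gm[measurable]: "G \<in> measurable M borel"
    using distributed_measurable[OF D] by simp
  have Dd: "distr M lborel G = density lborel (\<lambda>x. ennreal (gp x))"
    using distributed_distr_eq_density[OF D] gd by simp
  have I: "(\<integral>\<omega>. f c (G \<omega>) \<partial>M) = (\<integral>x. gp x * f c x \<partial>lborel)" for c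
  proof -
    have "(\<integral>\<omega>. f c (G \<omega>) \<partial>M) = integral\<^sup>L (distr M lborel G) (f c)"
      by (rule integral_distr[symmetric]) auto
    also have "\<dots> = integral\<^sup>L (density lborel (\<lambda>x. ennreal (gp x))) (f c)"
      using Dd by simp
    also have "\<dots> = (\<integral>x. gp x *\<^sub>R f c x \<partial>lborel)"
      by (rule integral_density) (auto simp: gp0)
    finally show ?thesis by simp
  qed
  define H where "H y = gp y * f 0 y" for y
  have Hm[measurable]: "H \<in> borel_measurable borel" unfolding H_def by measurable
  define c where "c = a \<bullet> (L *v a) - b \<bullet> (A *v b)"
  have pw: "gp x * f a x = exp (-(1/2) * c) * H (b + x)" for x
  proof -
    have cs: "(x + a) \<bullet> (L *v (x + a)) + x \<bullet> (P *v x)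
       = c + ((x + b) \<bullet> (L *v (x + b)) + (x + b) \<bullet> (P *v (x + b)))"
      unfolding c_def P_def by (rule complete_square[OF Ls Ps A b])
    have "gp x * f a x = k * exp (-(1/2) * ((x + a) \<bullet> (L *v (x + a)) + x \<bullet> (P *v x)))"
      unfolding gp_def f_def by (simp add: mult_exp_exp algebra_simps)
    also have "\<dots> = k * exp (-(1/2) * c + (-(1/2) * ((x + b) \<bullet> (P *v (x + b))) + -(1/2) * ((x + b) \<bullet> (L *v (x + b)))))"
      unfolding cs by (simp add: algebra_simps)
    also have "\<dots> = exp (-(1/2) * c) * H (b + x)"
      unfolding H_def gp_def f_def add.commute[of b x] by (simp only: exp_add add_0_right mult_ac)
    finally show ?thesis .
  qed
  have "(\<integral>\<omega>. f a (G \<omega>) \<partial>M) = (\<integral>x. exp (-(1/2) * c) * H (b + x) \<partial>lborel)"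
    unfolding I pw ..
  also have "\<dots> = exp (-(1/2) * c) * (\<integral>x. H (b + x) \<partial>lborel)" by simp
  also have "\<dots> = exp (-(1/2) * c) * (\<integral>x. H x \<partial>lborel)"
    using lborel_translate_integral[OF Hm] by simp
  also have "\<dots> = exp (-(1/2) * c) * (\<integral>\<omega>. f 0 (G \<omega>) \<partial>M)"
    unfolding I H_def ..
  finally show "(\<integral>\<omega>. exp (-(1/2) * ((G \<omega> + a) \<bullet> (L *v (G \<omega> + a)))) \<partial>M)
       = exp (-(1/2) * (a \<bullet> (L *v a) - b \<bullet> (A *v b))) *
         (\<integral>\<omega>. exp (-(1/2) * ((G \<omega> + 0) \<bullet> (L *v (G \<omega> + 0)))) \<partial>M)"
    unfolding f_def c_def .
  interpret prob_space M by (rule M)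
  have f0b: "\<bar>f 0 y\<bar> \<le> 1" for y
    using Lpsd[rule_format, of y] unfolding f_def by simp
  have int: "integrable M (\<lambda>\<omega>. f 0 (G \<omega>))"
    by (rule integrable_const_bound[where B=1]) (auto simp: f0b)
  have pos: "0 < f 0 y" for y unfolding f_def by simp
  have ge: "0 \<le> (\<integral>\<omega>. f 0 (G \<omega>) \<partial>M)"
    by (rule integral_nonneg_AE) (auto simp: less_imp_le[OF pos])
  have "(\<integral>\<omega>. f 0 (G \<omega>) \<partial>M) \<noteq> 0"
  proof
    assume "(\<integral>\<omega>. f 0 (G \<omega>) \<partial>M) = 0"
    then have "AE \<omega> in M. f 0 (G \<omega>) = 0"
      using integral_nonneg_eq_0_iff_AE[OF int] by (auto simp: less_imp_le[OF pos])
    then have "AE \<omega> in M. False" by (rule eventually_mono) (metis pos less_irrefl)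
    then show False using AE_False by simp
  qed
  with ge have "0 < (\<integral>\<omega>. f 0 (G \<omega>) \<partial>M)" by linarith
  then show "0 < (\<integral>\<omega>. exp (-(1/2) * ((G \<omega> + 0) \<bullet> (L *v (G \<omega> + 0)))) \<partial>M)"
    unfolding f_def .
qed

lemma diag_mv:
  fixes D :: "real^'n^'n"
  assumes "\<And>i j. i \<noteq> j \<Longrightarrow> D$i$j = 0"
  shows "D *v x = (\<chi> i. D$i$i * x$i)"
proof -
  have "(\<Sum>j\<in>UNIV. D$i$j * x$j) = D$i$i * x$i" for i
    by (subst sum.remove[of _ i]) (auto intro!: sum.neutral simp: assms)
  then show ?thesis by (simp add: matrix_vector_mult_def vec_eq_iff)
qed

lemma transpose_diff: "transpose ((A::real^'n^'n) - B) = transpose A - transpose B"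
  by (simp add: transpose_def vec_eq_iff)

theorem lemma2p1:
  fixes M :: "'a measure" and G :: "'a \<Rightarrow> real^'n" and \<Gamma> :: "real^'n^'n" and \<alpha> :: real
  assumes "prob_space M"
    and "transpose \<Gamma> = \<Gamma>"
    and "\<forall>x. x \<noteq> 0 \<longrightarrow> x \<bullet> (\<Gamma> *v x) > 0"
    and "distributed M lborel G (\<lambda>x. ennreal (gauss_density \<Gamma> x))"
  shows "\<exists>T. \<forall>t > T. \<forall>S :: real^'n^'n.
           (\<forall>i j. i \<noteq> j \<longrightarrow> S$i$j = 0) \<and> (\<forall>i. 0 \<le> S$i$i \<and> S$i$i \<le> 1) \<longrightarrow>
           (let Q = matrix_inv (mat 1 + matrix_inv (t *\<^sub>R \<Gamma>));
                ones = (\<chi> i. (1::real))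
            in summable (\<lambda>m. matpow (Q ** S) (Suc m)) \<and>
               Phi2 M G \<alpha> t S =
                 \<alpha>\<^sup>2 * t / 2 *
                 (ones \<bullet> (((Q - mat 1) + (mat 1 - matrix_inv Q) ** (\<Sum>m. matpow (Q ** S) (Suc m)) ** (Q - mat 1)) *v ones)))"
proof -
  have Gs: "transpose \<Gamma> = \<Gamma>" by (rule assms(2))
  have Gi: "invertible \<Gamma>" by (rule pd_invertible) (use assms(3) in auto)
  define P where "P = matrix_inv \<Gamma>"
  have PG: "P ** \<Gamma> = mat 1" "\<Gamma> ** P = mat 1" using minv[OF Gi] P_def by auto
  have Ps: "transpose P = P"
  proof -
    have "transpose P ** \<Gamma> = mat 1"
    proof -
      have "transpose P ** \<Gamma> = transpose (\<Gamma> ** P)" by (simp add: matrix_transpose_mul Gs)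
      then show ?thesis using PG(2) by simp
    qed
    then have "matrix_inv \<Gamma> = transpose P" by (rule minv_unique(2))
    then show ?thesis using P_def by simp
  qed
  have Ppd: "0 < x \<bullet> (P *v x)" if x: "x \<noteq> 0" for x
  proof -
    define y where "y = P *v x"
    have xy: "x = \<Gamma> *v y" unfolding y_def using PG(2) by (simp add: matrix_vector_mul_assoc)
    have "y \<noteq> 0" using x xy by auto
    then have "0 < y \<bullet> (\<Gamma> *v y)" using assms(3) by blast
    moreover have "x \<bullet> (P *v x) = y \<bullet> (\<Gamma> *v y)"
    proof -
      have "x \<bullet> (P *v x) = x \<bullet> y" by (simp add: y_def)
      also have "\<dots> = (\<Gamma> *v y) \<bullet> y" using xy by simp
      also have "\<dots> = y \<bullet> (\<Gamma> *v y)" by (rule inner_commute)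
      finally show ?thesis .
    qed
    ultimately show ?thesis by simp
  qed
  show ?thesis
  proof (intro exI[of _ 0] allI impI)
    fix t :: real and S :: "real^'n^'n"
    assume t: "t > 0"
      and SH: "(\<forall>i j. i \<noteq> j \<longrightarrow> S$i$j = 0) \<and> (\<forall>i. 0 \<le> S$i$i \<and> S$i$i \<le> 1)"
    have Sd: "\<And>i j. i \<noteq> j \<Longrightarrow> S$i$j = 0" and S0: "\<And>i. 0 \<le> S$i$i" and S1: "\<And>i. S$i$i \<le> 1"
      using SH by auto
    have Sv: "S *v x = (\<chi> i. S$i$i * x$i)" for x by (rule diag_mv[OF Sd])
    have Ss: "transpose S = S"
    proof -
      have "S$j$i = S$i$j" for i j using Sd by (cases "i = j") auto
      then show ?thesis by (simp add: transpose_def vec_eq_iff)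
    qed
    have xSx: "x \<bullet> (S *v x) \<le> x \<bullet> x" for x
    proof -
      have "x \<bullet> (S *v x) = (\<Sum>i\<in>UNIV. S$i$i * (x$i * x$i))"
        by (simp add: Sv inner_vec_def mult_ac)
      also have "\<dots> \<le> (\<Sum>i\<in>UNIV. x$i * x$i)"
        by (intro sum_mono mult_left_le_one_le) (auto simp: S0 S1)
      also have "\<dots> = x \<bullet> x" by (simp add: inner_vec_def)
      finally show ?thesis .
    qed
    define W where "W = mat 1 + (1/t) *\<^sub>R P"
    have tGi: "matrix_inv (t *\<^sub>R \<Gamma>) = (1/t) *\<^sub>R P"
    proof (rule minv_unique(2))
      show "(1/t) *\<^sub>R P ** (t *\<^sub>R \<Gamma>) = mat 1"
        using PG(1) t by (simp add: matrix_scalar_ac scalar_matrix_assoc[symmetric])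
    qed
    have Wx: "x \<bullet> (W *v x) = x \<bullet> x + (1/t) * (x \<bullet> (P *v x))" for x
      unfolding W_def by (simp add: matrix_vector_mult_add_rdistrib scaleR_matrix_vector_assoc[symmetric] inner_add_right)
    have Wi: "invertible W"
    proof (rule pd_invertible, intro allI impI)
      fix x :: "real^'n" assume "x \<noteq> 0"
      then show "0 < x \<bullet> (W *v x)" using Wx[of x] Ppd[of x] t
        by (simp add: add_pos_pos)
    qed
    define Q where "Q = matrix_inv W"
    have WQ: "W ** Q = mat 1" "Q ** W = mat 1" using minv[OF Wi] Q_def by auto
    have QinvW: "matrix_inv Q = W" using minv_unique(2)[OF WQ(1)] .
    have Qeq: "matrix_inv (mat 1 + matrix_inv (t *\<^sub>R \<Gamma>)) = Q" unfolding Q_def W_def tGi ..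
    have Qc: "norm (Q *v y) < norm y" if y: "y \<noteq> 0" for y
    proof -
      define u where "u = Q *v y"
      have yu: "y = W *v u" using WQ(1) unfolding u_def by (simp add: matrix_vector_mul_assoc)
      have "u \<noteq> 0" using y yu by auto
      then have "u \<bullet> u < u \<bullet> y" using Wx[of u] Ppd[of u] t yu by simp
      also have "u \<bullet> y \<le> norm u * norm y" by (rule norm_cauchy_schwarz)
      finally have "norm u * norm u < norm u * norm y" by (simp add: power2_norm_eq_inner[symmetric] power2_eq_square)
      then show ?thesis using u_def by (meson mult_left_less_imp_less norm_ge_zero)
    qed
    have Sn: "norm (S *v x) \<le> norm x" for x
    proof (rule norm_le_componentwise_cart)
      fix i show "norm ((S *v x) $ i) \<le> norm (x $ i)"
        by (simp add: Sv abs_mult mult_left_le_one_le S0 S1)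
    qed
    have MC: "\<forall>x. x \<noteq> 0 \<longrightarrow> norm ((Q ** S) *v x) < norm x"
    proof (intro allI impI)
      fix x :: "real^'n" assume x: "x \<noteq> 0"
      show "norm ((Q ** S) *v x) < norm x"
      proof (cases "S *v x = 0")
        case True then show ?thesis using x by (simp add: matrix_vector_mul_assoc[symmetric])
      next
        case False
        then have "norm (Q *v (S *v x)) < norm (S *v x)" by (rule Qc)
        then show ?thesis using Sn[of x] by (simp add: matrix_vector_mul_assoc)
      qed
    qed
    have summ: "summable (\<lambda>m. matpow (Q ** S) (Suc m))" by (rule contraction_summable[OF MC])
    define N where "N = (\<Sum>m. matpow (Q ** S) (Suc m))"
    have neu: "(mat 1 - Q ** S) ** (mat 1 + N) = mat 1" using neumann[OF summ] N_def by simp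
    have WSi: "invertible (W - S)"
    proof (rule pd_invertible, intro allI impI)
      fix x :: "real^'n" assume "x \<noteq> 0"
      then have "0 < x \<bullet> (P *v x) / t" using Ppd[of x] t by simp
      then have "0 < x \<bullet> (W *v x) - x \<bullet> (S *v x)" using Wx[of x] xSx[of x]
        by simp
      then show "0 < x \<bullet> ((W - S) *v x)" by (simp add: matrix_vector_mult_diff_rdistrib inner_diff_right)
    qed
    define K where "K = matrix_inv (W - S)"
    have KWS: "K ** (W - S) = mat 1" and WSK: "(W - S) ** K = mat 1" using minv[OF WSi] K_def by auto
    have IQS: "mat 1 - Q ** S = Q ** (W - S)" using WQ(2) by (simp add: mm_sub_l)
    have WSN: "(W - S) ** (mat 1 + N) = W"
    proof -
      have "W = W ** ((mat 1 - Q ** S) ** (mat 1 + N))" using neu by simp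
      also have "\<dots> = (W ** Q) ** (W - S) ** (mat 1 + N)" unfolding IQS by (simp add: matrix_mul_assoc)
      finally show ?thesis using WQ(1) by simp
    qed
    have "K ** W = mat 1 + N"
    proof -
      have "K ** W = K ** ((W - S) ** (mat 1 + N))" using WSN by simp
      also have "\<dots> = mat 1 + N" using KWS by (simp add: matrix_mul_assoc)
      finally show ?thesis .
    qed
    then have Neq: "N = K ** W - mat 1" by (simp add: algebra_simps)
    have Y: "(Q - mat 1) + (mat 1 - matrix_inv Q) ** N ** (Q - mat 1)
        = - (mat 1 - S) + (mat 1 - S) ** K ** (mat 1 - S)"
      unfolding QinvW Neq using key_identity[OF WQ(1) KWS WSK] by simp
    show "let Q = matrix_inv (mat 1 + matrix_inv (t *\<^sub>R \<Gamma>));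
                ones = (\<chi> i. (1::real))
            in summable (\<lambda>m. matpow (Q ** S) (Suc m)) \<and>
               Phi2 M G \<alpha> t S =
                 \<alpha>\<^sup>2 * t / 2 *
                 (ones \<bullet> (((Q - mat 1) + (mat 1 - matrix_inv Q) ** (\<Sum>m. matpow (Q ** S) (Suc m)) ** (Q - mat 1)) *v ones))"
      unfolding Let_def Qeq N_def[symmetric]
    proof (intro conjI summ)
      show "Phi2 M G \<alpha> t S = \<alpha>\<^sup>2 * t / 2 *
        ((\<chi> i. 1) \<bullet> ((Q - mat 1 + (mat 1 - matrix_inv Q) ** N ** (Q - mat 1)) *v (\<chi> i. 1)))"
      proof -
        define ones :: "real^'n" where "ones = (\<chi> i. 1)"
        define X where "X = (mat 1 - S) ** K ** (mat 1 - S)"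
        define L where "L = t *\<^sub>R (mat 1 - S)"
        define A where "A = L + matrix_inv \<Gamma>"
        define a where "a = \<alpha> *\<^sub>R ones"
        define u where "u = (mat 1 - S) *v a"
        define b where "b = K *v u"
        have Ldiag0: "L$i$j = 0" if "i \<noteq> j" for i j using Sd[OF that] that by (simp add: L_def mat_def)
        have ISs: "transpose (mat 1 - S) = mat 1 - S" by (simp add: transpose_diff Ss)
        have Ls: "transpose L = L" by (simp add: L_def transpose_scalar ISs)
        have La: "L *v z = t *\<^sub>R ((mat 1 - S) *v z)" for z
          by (simp add: L_def scaleR_matrix_vector_assoc)
        have Lx: "x \<bullet> (L *v x) = t * (x \<bullet> x - x \<bullet> (S *v x))" for x
          by (simp add: La matrix_vector_mult_diff_rdistrib inner_diff_right)
        have Lpsd: "\<forall>x. 0 \<le> x \<bullet> (L *v x)" using Lx xSx t by simp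
        have AW: "A *v z = t *\<^sub>R ((W - S) *v z)" for z
        proof -
          have "A *v z = t *\<^sub>R z - t *\<^sub>R (S *v z) + P *v z"
            by (simp add: A_def P_def[symmetric] La matrix_vector_mult_add_rdistrib
                matrix_vector_mult_diff_rdistrib scaleR_diff_right)
          also have "\<dots> = t *\<^sub>R ((W - S) *v z)" using t
            by (simp add: W_def matrix_vector_mult_add_rdistrib matrix_vector_mult_diff_rdistrib
                scaleR_matrix_vector_assoc[symmetric] scaleR_diff_right scaleR_add_right)
          finally show ?thesis .
        qed
        have Ab: "A *v b = L *v a"
        proof -
          have "A *v b = t *\<^sub>R ((W - S) *v (K *v u))"
            by (simp only: AW b_def)
          also have "\<dots> = t *\<^sub>R u" by (simp add: WSK matrix_vector_mul_assoc)
          also have "\<dots> = L *v a" by (simp add: La u_def)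
          finally show ?thesis .
        qed
        have Ldg: "(\<Sum>i\<in>UNIV. L$i$i * (y$i + \<beta>)\<^sup>2) = (y + (\<chi> i. \<beta>)) \<bullet> (L *v (y + (\<chi> i. \<beta>)))" for y \<beta>
          by (simp add: diag_mv[OF Ldiag0] inner_vec_def power2_eq_square mult_ac)
        have PhiE: "Phi M G \<beta> t S = ln (\<integral>\<omega>. exp (-(1/2) * ((G \<omega> + (\<chi> i. \<beta>)) \<bullet> (L *v (G \<omega> + (\<chi> i. \<beta>))))) \<partial>M)" for \<beta>
          unfolding Phi_def Let_def L_def[symmetric] Ldg ..
        have a_eq: "(\<chi> i. \<alpha>) = a" by (simp add: a_def ones_def vec_eq_iff)
        have z_eq: "(\<chi> i. (0::real)) = 0" by (simp add: vec_eq_iff)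
        note GS = gauss_shift[OF assms(1) assms(4) Ls Ps[unfolded P_def] A_def Ab Lpsd]
        define E0 where "E0 = (\<integral>\<omega>. exp (-(1/2) * ((G \<omega> + 0) \<bullet> (L *v (G \<omega> + 0)))) \<partial>M)"
        define c where "c = a \<bullet> (L *v a) - b \<bullet> (A *v b)"
        have "Phi2 M G \<alpha> t S = ln (exp (-(1/2) * c) * E0) - ln E0"
          unfolding Phi2_def PhiE a_eq z_eq GS(1) c_def E0_def ..
        also have "\<dots> = -(1/2) * c" using GS(2) unfolding E0_def[symmetric] by (simp add: ln_mult)
        also have "c = t * (\<alpha>\<^sup>2 * (ones \<bullet> ((mat 1 - S) *v ones)) - \<alpha>\<^sup>2 * (ones \<bullet> (X *v ones)))"
        proof -
          have c1: "a \<bullet> (L *v a) = t * (a \<bullet> u)" by (simp add: La u_def)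
          have "b \<bullet> (A *v b) = t * (b \<bullet> u)" by (simp add: Ab La u_def)
          also have "b \<bullet> u = u \<bullet> (K *v u)" by (simp add: b_def inner_commute)
          also have "u \<bullet> (K *v u) = a \<bullet> ((mat 1 - S) *v (K *v u))"
            unfolding u_def inner_transpose[of a "mat 1 - S"] ISs ..
          also have "\<dots> = a \<bullet> (X *v a)" by (simp add: X_def u_def matrix_vector_mul_assoc matrix_mul_assoc)
          finally have c2: "b \<bullet> (A *v b) = t * (a \<bullet> (X *v a))" .
          have c3: "a \<bullet> u = \<alpha>\<^sup>2 * (ones \<bullet> ((mat 1 - S) *v ones))"
            by (simp add: u_def a_def matrix_vector_mult_scaleR power2_eq_square)
          have c4: "a \<bullet> (X *v a) = \<alpha>\<^sup>2 * (ones \<bullet> (X *v ones))"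
            by (simp add: a_def matrix_vector_mult_scaleR power2_eq_square)
          show ?thesis unfolding c_def c1 c2 c3 c4 by (simp add: algebra_simps)
        qed
        also have "-(1/2) * (t * (\<alpha>\<^sup>2 * (ones \<bullet> ((mat 1 - S) *v ones)) - \<alpha>\<^sup>2 * (ones \<bullet> (X *v ones))))
            = \<alpha>\<^sup>2 * t / 2 * (ones \<bullet> ((- (mat 1 - S) + X) *v ones))"
          by (simp add: matrix_vector_mult_add_rdistrib inner_add_right algebra_simps)
        also have "- (mat 1 - S) + X = Q - mat 1 + (mat 1 - matrix_inv Q) ** N ** (Q - mat 1)"
          using Y X_def by simp
        finally show ?thesis unfolding ones_def .
      qed
    qed
  qed
qed

end
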